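(* Let $n_1,n_2\ge 1$ be integers, $n=n_1+n_2$, and consider a uniformly random arrangement of $n_1$ symbols $x$ and $n_2$ symbols $y$ (all $\binom{n}{n_1}$ arrangements equally likely). Let $R_1$ and $R_2$ be the numbers of runs of $x$'s and of $y$'s, respectively, and $R_M=\max(R_1,R_2)$. Then (i) $E(R_M\mid R_1>R_2)=2+\dfrac{(n_1-2)(n_2-1)}{n-2}$; (ii) $E(R_M\mid R_1<R_2)=2+\dfrac{(n_1-1)(n_2-2)}{n-2}$; (iii) $E(R_M\mid R_1=R_2)=1+\dfrac{(n_1-1)(n_2-1)}{n-2}$.
   Context: A run is a maximal block of consecutive identical symbols in the arrangement. Conditional expectations given an event are considered when that event has positive probability. *)

theory Defs
  imports Main "HOL-Library.Multiset" Complex_Main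
begin

text \<open>An arrangement of n1 symbols x (encoded as True) and n2 symbols y
 (encoded as False) is a boolean list of length n1+n2 with exactly n1 Trues.\<close>
definition arrangements :: "nat \<Rightarrow> nat \<Rightarrow> bool list set" where
  "arrangements n1 n2 = {xs. length xs = n1 + n2 \<and> count_list xs True = n1}"

definition runs :: "bool \<Rightarrow> bool list \<Rightarrow> nat" where
  "runs c xs = count_list (remdups_adj xs) c"

definition R1 :: "bool list \<Rightarrow> nat" where "R1 xs = runs True xs"
definition R2 :: "bool list \<Rightarrow> nat" where "R2 xs = runs False xs"
definition RM :: "bool list \<Rightarrow> nat" where "RM xs = max (R1 xs) (R2 xs)"

definition cond_exp :: "nat \<Rightarrow> nat \<Rightarrow> (bool list \<Rightarrow> real) \<Rightarrow> (bool list \<Rightarrow> bool) \<Rightarrow> real" where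
  "cond_exp n1 n2 X E =
     (\<Sum>xs\<in>{xs\<in>arrangements n1 n2. E xs}. X xs) / real (card {xs\<in>arrangements n1 n2. E xs})"

definition event_prob :: "nat \<Rightarrow> nat \<Rightarrow> (bool list \<Rightarrow> bool) \<Rightarrow> real" where
  "event_prob n1 n2 E = real (card {xs\<in>arrangements n1 n2. E xs}) / real (card (arrangements n1 n2))"

end

theory Submission
  imports Defs
begin


lemma runs_Cons: "runs c (x#xs) = runs c xs + (if x = c \<and> (xs = [] \<or> hd xs \<noteq> c) then 1 else 0)"
  unfolding runs_def by (cases xs) auto

lemma runs_rev: "runs c (rev xs) = runs c xs"
  unfolding runs_def by simp

lemma runs_snoc: "runs c (xs@[x]) = runs c xs + (if x = c \<and> (xs = [] \<or> last xs \<noteq> c) then 1 else 0)"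
proof -
  have "runs c (xs@[x]) = runs c (x # rev xs)" by (metis runs_rev rev.simps(2) rev_rev_ident)
  also have "\<dots> = runs c (rev xs) + (if x = c \<and> (rev xs = [] \<or> hd (rev xs) \<noteq> c) then 1 else 0)"
    by (rule runs_Cons)
  finally show ?thesis by (simp add: runs_rev hd_rev)
qed

lemma runs_diff: "xs \<noteq> [] \<Longrightarrow> int (R1 xs) - int (R2 xs) =
   (if hd xs then (if last xs then 1 else 0) else (if last xs then 0 else -1))"
proof (induction xs)
  case Nil then show ?case by simp
next
  case (Cons x xs)
  show ?case
  proof (cases "xs = []")
    case True then show ?thesis by (simp add: R1_def R2_def runs_def)
  next
    case False
    with Cons.IH have ih: "int (R1 xs) - int (R2 xs) =
   (if hd xs then (if last xs then 1 else 0) else (if last xs then 0 else -1))" by simp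
    show ?thesis using False ih by (cases x; cases "hd xs"; cases "last xs") (simp_all add: R1_def R2_def runs_Cons)
  qed
qed

lemma count_TF: "count_list xs True + count_list xs False = length xs"
  by (induction xs) auto

lemma arr_Suc_Suc: "arrangements (Suc a) (Suc b) = (#) True ` arrangements a (Suc b) \<union> (#) False ` arrangements (Suc a) b"
proof (rule set_eqI)
  fix xs show "xs \<in> arrangements (Suc a) (Suc b) \<longleftrightarrow> xs \<in> (#) True ` arrangements a (Suc b) \<union> (#) False ` arrangements (Suc a) b"
    by (cases xs) (auto simp: arrangements_def)
qed

lemma arr_Suc_0: "arrangements (Suc a) 0 = (#) True ` arrangements a 0"
proof (rule set_eqI)
  fix xs show "xs \<in> arrangements (Suc a) 0 \<longleftrightarrow> xs \<in> (#) True ` arrangements a 0"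
    using count_TF[of xs] by (cases xs) (auto simp: arrangements_def)
qed

lemma arr_0_Suc: "arrangements 0 (Suc b) = (#) False ` arrangements 0 b"
proof (rule set_eqI)
  fix xs show "xs \<in> arrangements 0 (Suc b) \<longleftrightarrow> xs \<in> (#) False ` arrangements 0 b"
    by (cases xs) (auto simp: arrangements_def)
qed

lemma arr_0_0: "arrangements 0 0 = {[]}"
  by (auto simp: arrangements_def)

lemma arr_a_0: "arrangements a 0 = {replicate a True}"
  by (induction a) (auto simp: arr_0_0 arr_Suc_0)

lemma arr_0_b: "arrangements 0 b = {replicate b False}"
  by (induction b) (auto simp: arr_0_0 arr_0_Suc)

lemma finite_arr: "finite (arrangements a b)"
proof -
  have "arrangements a b \<subseteq> {xs. set xs \<subseteq> UNIV \<and> length xs = a + b}" by (auto simp: arrangements_def)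
  thus ?thesis using finite_lists_length_eq[of "UNIV :: bool set"] finite_subset by auto
qed

lemma card_arr: "card (arrangements a b) = (a + b) choose a"
proof (induction b arbitrary: a)
  case 0 then show ?case by (simp add: arr_a_0)
next
  case (Suc b)
  note outer = Suc.IH
  show ?case
  proof (induction a)
    case 0 then show ?case by (simp add: arr_0_b)
  next
    case (Suc a)
    have "card (arrangements (Suc a) (Suc b)) = card ((#) True ` arrangements a (Suc b)) + card ((#) False ` arrangements (Suc a) b)"
      unfolding arr_Suc_Suc by (rule card_Un_disjoint) (auto simp: finite_arr)
    also have "\<dots> = card (arrangements a (Suc b)) + card (arrangements (Suc a) b)"
      by (simp add: card_image)
    finally show ?case using Suc.IH outer[of "Suc a"] by simp
  qed
qed

lemma sum_arr_Suc_Suc: "(\<Sum>xs\<in>arrangements (Suc a) (Suc b). f xs) =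
   (\<Sum>zs\<in>arrangements a (Suc b). f (True#zs)) + (\<Sum>zs\<in>arrangements (Suc a) b. f (False#zs))"
proof -
  have "(\<Sum>xs\<in>arrangements (Suc a) (Suc b). f xs) = sum f ((#) True ` arrangements a (Suc b)) + sum f ((#) False ` arrangements (Suc a) b)"
    unfolding arr_Suc_Suc by (rule sum.union_disjoint) (auto simp: finite_arr)
  also have "\<dots> = (\<Sum>zs\<in>arrangements a (Suc b). f (True#zs)) + (\<Sum>zs\<in>arrangements (Suc a) b. f (False#zs))" by (simp add: sum.reindex)
  finally show ?thesis .
qed



lemma R1_True: "R1 (True#zs) = R1 zs + (if zs = [] \<or> \<not> hd zs then 1 else 0)"
  unfolding R1_def by (simp add: runs_Cons)
lemma R1_False: "R1 (False#zs) = R1 zs"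
  unfolding R1_def by (simp add: runs_Cons)

lemma cnt: "(\<Sum>zs\<in>arrangements a (Suc b). (if zs = [] \<or> \<not> hd zs then 1 else 0::nat)) = (a+b) choose a"
proof (cases a)
  case 0 then show ?thesis by (simp add: arr_0_b)
next
  case (Suc a')
  have "(\<Sum>zs\<in>arrangements a (Suc b). (if zs = [] \<or> \<not> hd zs then 1 else 0::nat)) = 
     (\<Sum>zs\<in>arrangements (Suc a') b. 1)" unfolding Suc sum_arr_Suc_Suc by simp
  also have "\<dots> = (a+b) choose a" using Suc by (simp add: card_arr)
  finally show ?thesis .
qed

lemma F0: "(\<Sum>xs\<in>arrangements 0 b. R1 xs) = 0"
  by (simp add: arr_0_b R1_def runs_def remdups_adj_replicate)

lemma FSuc: "(\<Sum>xs\<in>arrangements (Suc a) b. R1 xs) = (b+1) * ((a+b) choose a)"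
proof (induction b arbitrary: a)
  case 0 then show ?case by (simp add: arr_a_0 R1_def runs_def remdups_adj_replicate del: replicate.simps)
next
  case (Suc b)
  note outer = Suc.IH
  show ?case
  proof (induction a)
    case 0
    have "(\<Sum>xs\<in>arrangements (Suc 0) (Suc b). R1 xs) = 
       (\<Sum>zs\<in>arrangements 0 (Suc b). R1 zs) + (\<Sum>zs\<in>arrangements 0 (Suc b). (if zs = [] \<or> \<not> hd zs then 1 else 0::nat))
        + (\<Sum>zs\<in>arrangements (Suc 0) b. R1 zs)"
      unfolding sum_arr_Suc_Suc R1_True R1_False sum.distrib by simp
    then show ?case using outer[of 0] by (simp add: F0 cnt)
  next
    case (Suc a)
    have "(\<Sum>xs\<in>arrangements (Suc (Suc a)) (Suc b). R1 xs) = 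
       (\<Sum>zs\<in>arrangements (Suc a) (Suc b). R1 zs) + (\<Sum>zs\<in>arrangements (Suc a) (Suc b). (if zs = [] \<or> \<not> hd zs then 1 else 0::nat))
        + (\<Sum>zs\<in>arrangements (Suc (Suc a)) b. R1 zs)"
      unfolding sum_arr_Suc_Suc R1_True R1_False sum.distrib by simp
    also have "\<dots> = (b+2) * ((Suc a + b) choose a) + ((Suc a + b) choose Suc a) + (b+1) * ((Suc a + b) choose Suc a)"
      using Suc.IH outer[of "Suc a"] cnt[of "Suc a" b] by simp
    also have "\<dots> = (b+2) * (((Suc a + b) choose a) + ((Suc a + b) choose Suc a))"
      by (simp add: algebra_simps)
    also have "\<dots> = (Suc b + 1) * ((Suc a + Suc b) choose (Suc a))"
      by simp
    finally show ?case .
  qed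
qed



lemma count_map_Not: "count_list (map Not ys) c = count_list ys (\<not> c)"
  by (induction ys) auto

lemma inj_Not': "inj Not" by (auto simp: inj_def)

lemma R2_Not: "R2 xs = R1 (map Not xs)"
  unfolding R1_def R2_def runs_def
  by (simp add: remdups_adj_map_injective[OF inj_Not'] count_map_Not)

lemma map_Not_arr: "map Not ` arrangements a b = arrangements b a"
proof -
  have 1: "map Not xs \<in> arrangements b a" if "xs \<in> arrangements a b" for a b xs
    using that count_TF[of xs] by (auto simp: arrangements_def count_map_Not)
  show ?thesis
  proof
    show "map Not ` arrangements a b \<subseteq> arrangements b a" using 1 by auto
    show "arrangements b a \<subseteq> map Not ` arrangements a b"
    proof
      fix xs assume "xs \<in> arrangements b a"
      hence "map Not xs \<in> arrangements a b" using 1 by blast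
      moreover have "xs = map Not (map Not xs)" by (simp add: comp_def)
      ultimately show "xs \<in> map Not ` arrangements a b" by blast
    qed
  qed
qed

lemma H_sum: "(\<Sum>xs\<in>arrangements a b. R2 xs) = (\<Sum>xs\<in>arrangements b a. R1 xs)"
proof -
  have inj: "inj_on (map Not) (arrangements a b)" by (rule inj_on_inverseI[where g = "map Not"]) (simp add: comp_def)
  have "(\<Sum>xs\<in>arrangements b a. R1 xs) = (\<Sum>xs\<in>map Not ` arrangements a b. R1 xs)" by (simp add: map_Not_arr)
  also have "\<dots> = (\<Sum>xs\<in>arrangements a b. R1 (map Not xs))" by (simp add: sum.reindex[OF inj])
  finally show ?thesis by (simp add: R2_Not)
qed

lemma hl_image: "{xs \<in> A. 2 \<le> length xs \<and> hd xs = h \<and> last xs = l} = (\<lambda>zs. h#zs@[l]) ` {zs. h#zs@[l] \<in> A}"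
proof
  show "(\<lambda>zs. h#zs@[l]) ` {zs. h#zs@[l] \<in> A} \<subseteq> {xs \<in> A. 2 \<le> length xs \<and> hd xs = h \<and> last xs = l}" by auto
  show "{xs \<in> A. 2 \<le> length xs \<and> hd xs = h \<and> last xs = l} \<subseteq> (\<lambda>zs. h#zs@[l]) ` {zs. h#zs@[l] \<in> A}"
  proof
    fix xs assume xs: "xs \<in> {xs \<in> A. 2 \<le> length xs \<and> hd xs = h \<and> last xs = l}"
    then obtain y ys where xy: "xs = y # ys" by (cases xs) auto
    with xs have ys: "ys \<noteq> []" by auto
    have "ys = butlast ys @ [l]" using xs xy ys append_butlast_last_id[OF ys] by simp
    hence "xs = h # butlast ys @ [l]" using xs xy by simp
    thus "xs \<in> (\<lambda>zs. h#zs@[l]) ` {zs. h#zs@[l] \<in> A}" using xs by auto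
  qed
qed

lemma inj_hl: "inj_on (\<lambda>zs. h#zs@[l]) A" by (rule inj_onI) simp



lemma len_arr: "xs \<in> arrangements a b \<Longrightarrow> length xs = a + b" by (simp add: arrangements_def)

lemma diff_cases:
  assumes "xs \<in> arrangements a b" "a \<ge> 1" "b \<ge> 1"
  shows "(R2 xs < R1 xs \<longleftrightarrow> 2 \<le> length xs \<and> hd xs = True \<and> last xs = True)"
    "(R1 xs < R2 xs \<longleftrightarrow> 2 \<le> length xs \<and> hd xs = False \<and> last xs = False)"
    "(R1 xs = R2 xs \<longleftrightarrow> (2 \<le> length xs \<and> hd xs = True \<and> last xs = False) \<or> (2 \<le> length xs \<and> hd xs = False \<and> last xs = True))"
proof -
  have l: "2 \<le> length xs" using len_arr[OF assms(1)] assms by simp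
  hence ne: "xs \<noteq> []" by auto
  note d = runs_diff[OF ne]
  show "(R2 xs < R1 xs \<longleftrightarrow> 2 \<le> length xs \<and> hd xs = True \<and> last xs = True)"
    using d l by (cases "hd xs"; cases "last xs") auto
  show "(R1 xs < R2 xs \<longleftrightarrow> 2 \<le> length xs \<and> hd xs = False \<and> last xs = False)"
    using d l by (cases "hd xs"; cases "last xs") auto
  show "(R1 xs = R2 xs \<longleftrightarrow> (2 \<le> length xs \<and> hd xs = True \<and> last xs = False) \<or> (2 \<le> length xs \<and> hd xs = False \<and> last xs = True))"
    using d l by (cases "hd xs"; cases "last xs") auto
qed



lemma alg1: fixes x y B :: real assumes "B > 0" "x \<ge> 0" "y \<ge> 0"
  shows "((x+1)*B + (x+y+1)*B/(y+1)) / ((x+y+1)*B/(y+1)) = 1 + (x+1)*(y+1)/(x+y+1)"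
proof -
  have p: "x+y+1 \<noteq> 0" "y + 1 \<noteq> 0" "B \<noteq> 0" using assms by auto
  have pos: "B * (x+y+1) * (y+1) > 0" using assms by simp
  have "(x+y+1)*B/(y+1) \<noteq> 0" using p by simp
  then show ?thesis using p
    by (simp add: divide_eq_eq field_simps) (use pos in \<open>simp add: algebra_simps\<close>)
qed
lemma alg2: fixes x y :: real assumes "x \<ge> 0" "y \<ge> 0"
  shows "1 + (x+1)*(y+1)/(x+y+1) = 2 + x*y/(x+y+1)"
proof -
  have p: "x+y+1 \<noteq> 0" using assms by auto
  show ?thesis using p by (simp add: field_simps)
qed
lemma alg3: fixes x y C :: real assumes "C > 0" "x \<ge> 0" "y \<ge> 0"
  shows "((y+2)*C - (y+1)*((y+1)*C/(x+y+1)) + ((y+2)*C - (y+1)*((y+1)*C/(x+y+1)))) / (2*C) = 1 + x*(y+1)/(x+y+1)"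
proof -
  have p: "x+y+1 \<noteq> 0" "C \<noteq> 0" using assms by auto
  have pos: "2 * C * (x+y+1) * (x+y+1) > 0" using assms by simp
  show ?thesis using p
    by (simp add: divide_eq_eq field_simps) (use pos in \<open>simp add: algebra_simps\<close>)
qed

lemma ep0: "{xs\<in>arrangements a b. E xs} = {} \<Longrightarrow> \<not> event_prob a b E > 0"
proof -
  assume h: "{xs\<in>arrangements a b. E xs} = {}"
  have "card {xs\<in>arrangements a b. E xs} = 0" by (simp only: h card.empty)
  thus ?thesis unfolding event_prob_def by simp
qed

lemma part1:
  assumes "a \<ge> 1" "b \<ge> 1"
  shows "event_prob a b (\<lambda>xs. R1 xs > R2 xs) > 0 \<longrightarrow>
           cond_exp a b (\<lambda>xs. real (RM xs)) (\<lambda>xs. R1 xs > R2 xs)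
             = 2 + (real a - 2) * (real b - 1) / (real (a + b) - 2)"
proof -
  have S: "{xs\<in>arrangements a b. R1 xs > R2 xs} = (\<lambda>zs. True#zs@[True]) ` {zs. True#zs@[True] \<in> arrangements a b}"
  proof -
    have "{xs\<in>arrangements a b. R1 xs > R2 xs} = {xs\<in>arrangements a b. 2 \<le> length xs \<and> hd xs = True \<and> last xs = True}"
      using diff_cases(1)[OF _ assms] by blast
    thus ?thesis by (simp only: hl_image)
  qed
  show ?thesis
  proof (cases "a < 2")
    case True
    have "{zs. True#zs@[True] \<in> arrangements a b} = {}" using True by (auto simp: arrangements_def)
    then have "{xs\<in>arrangements a b. R1 xs > R2 xs} = {}" using S by simp
    then show ?thesis using ep0[of a b "\<lambda>xs. R1 xs > R2 xs"] by blast
  next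
    case False
    then obtain c where c: "a = Suc (Suc c)" by (metis add_2_eq_Suc le_Suc_ex not_less)
    obtain d where d: "b = Suc d" using assms by (cases b) auto
    have Z: "{zs. True#zs@[True] \<in> arrangements a b} = arrangements c b" using c by (auto simp: arrangements_def)
    have RMv: "RM (True#zs@[True]) = R2 zs + 1" for zs
    proof -
      have "int (R1 (True#zs@[True])) - int (R2 (True#zs@[True])) = 1" using runs_diff[of "True#zs@[True]"] by simp
      moreover have "R2 (True#zs@[True]) = R2 zs" unfolding R2_def by (simp add: runs_Cons runs_snoc)
      ultimately show ?thesis unfolding RM_def by simp
    qed
    have card: "card {xs\<in>arrangements a b. R1 xs > R2 xs} = (c + d + 1) choose c"
      unfolding S Z by (simp add: card_image[OF inj_hl] card_arr d)
    have sum: "(\<Sum>xs\<in>{xs\<in>arrangements a b. R1 xs > R2 xs}. real (RM xs)) = real ((c+1) * ((d + c) choose d)) + real ((c + d + 1) choose c)"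
    proof -
      have "(\<Sum>xs\<in>{xs\<in>arrangements a b. R1 xs > R2 xs}. real (RM xs)) = (\<Sum>zs\<in>arrangements c b. real (R2 zs) + 1)"
        unfolding S Z by (simp add: sum.reindex[OF inj_hl] RMv add.commute)
      also have "\<dots> = real (\<Sum>zs\<in>arrangements c b. R2 zs) + real (card (arrangements c b))"
        by (simp add: sum.distrib)
      also have "\<dots> = real ((c+1) * ((d + c) choose d)) + real ((c + d + 1) choose c)"
        unfolding H_sum d FSuc card_arr by simp
      finally show ?thesis .
    qed
    have id1: "(d+1) * ((c+d+1) choose c) = (c+d+1) * ((c+d) choose d)"
    proof -
      have "(c+d+1) choose c = (c+d+1) choose (d+1)" using binomial_symmetric[of "d+1" "c+d+1"] by simp
      thus ?thesis using Suc_times_binomial[of d "c+d"] by simp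
    qed
    define B where "B = real ((c+d) choose d)"
    have Bp: "B > 0" unfolding B_def by simp
    have X: "real ((c+d+1) choose c) = (c+d+1) * B / (d+1)"
      using arg_cong[OF id1, of real] unfolding B_def by (simp add: field_simps)
    have e1: "cond_exp a b (\<lambda>xs. real (RM xs)) (\<lambda>xs. R1 xs > R2 xs) = (real ((c+1) * ((d + c) choose d)) + real ((c + d + 1) choose c)) / real ((c + d + 1) choose c)"
      unfolding cond_exp_def sum card by (rule refl)
    have dc: "d + c = c + d" by simp
    have e2: "real ((c+1) * ((d + c) choose d)) = (c+1) * B" unfolding dc B_def by (simp add: algebra_simps)
    have "cond_exp a b (\<lambda>xs. real (RM xs)) (\<lambda>xs. R1 xs > R2 xs) = ((c+1) * B + (c+d+1) * B / (d+1)) / ((c+d+1) * B / (d+1))"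
      unfolding e1 e2 X by (rule refl)
    also have "\<dots> = 1 + (c+1)*(d+1)/(c+d+1)"
      unfolding of_nat_add of_nat_mult of_nat_1 by (rule alg1[OF Bp]) simp_all
    also have "\<dots> = 2 + c*d/(c+d+1)"
      unfolding of_nat_add of_nat_mult of_nat_1 by (rule alg2) simp_all
    also have "\<dots> = 2 + (real a - 2) * (real b - 1) / (real (a + b) - 2)"
    proof -
      have "real a - 2 = c" "real b - 1 = d" "real (a+b) - 2 = c + d + 1" unfolding c d by simp_all
      thus ?thesis by simp
    qed
    finally show ?thesis by simp
  qed
qed



lemma part2:
  assumes "a \<ge> 1" "b \<ge> 1"
  shows "event_prob a b (\<lambda>xs. R1 xs < R2 xs) > 0 \<longrightarrow>
           cond_exp a b (\<lambda>xs. real (RM xs)) (\<lambda>xs. R1 xs < R2 xs)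
             = 2 + (real a - 1) * (real b - 2) / (real (a + b) - 2)"
proof -
  have S: "{xs\<in>arrangements a b. R1 xs < R2 xs} = (\<lambda>zs. False#zs@[False]) ` {zs. False#zs@[False] \<in> arrangements a b}"
  proof -
    have "{xs\<in>arrangements a b. R1 xs < R2 xs} = {xs\<in>arrangements a b. 2 \<le> length xs \<and> hd xs = False \<and> last xs = False}"
      using diff_cases(2)[OF _ assms] by blast
    thus ?thesis by (simp only: hl_image)
  qed
  show ?thesis
  proof (cases "b < 2")
    case True
    have "{zs. False#zs@[False] \<in> arrangements a b} = {}"
    proof (rule ccontr)
      assume "{zs. False#zs@[False] \<in> arrangements a b} \<noteq> {}"
      then obtain zs where "False#zs@[False] \<in> arrangements a b" by blast
      then have "length zs + 2 = a + b" "count_list zs True = a" by (auto simp: arrangements_def)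
      with count_TF[of zs] True show False by simp
    qed
    then have "{xs\<in>arrangements a b. R1 xs < R2 xs} = {}" using S by simp
    then show ?thesis using ep0[of a b "\<lambda>xs. R1 xs < R2 xs"] by blast
  next
    case False
    then obtain d where d: "b = Suc (Suc d)" by (metis add_2_eq_Suc le_Suc_ex not_less)
    obtain c where c: "a = Suc c" using assms by (cases a) auto
    have Z: "{zs. False#zs@[False] \<in> arrangements a b} = arrangements a d" using d by (auto simp: arrangements_def)
    have RMv: "RM (False#zs@[False]) = R1 zs + 1" for zs
    proof -
      have "int (R1 (False#zs@[False])) - int (R2 (False#zs@[False])) = -1" using runs_diff[of "False#zs@[False]"] by simp
      moreover have "R1 (False#zs@[False]) = R1 zs" unfolding R1_def by (simp add: runs_Cons runs_snoc)
      ultimately show ?thesis unfolding RM_def by simp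
    qed
    have card: "card {xs\<in>arrangements a b. R1 xs < R2 xs} = (Suc c + d) choose (Suc c)"
      unfolding S Z by (simp add: card_image[OF inj_hl] card_arr c)
    have sum: "(\<Sum>xs\<in>{xs\<in>arrangements a b. R1 xs < R2 xs}. real (RM xs)) = real ((d+1) * ((c + d) choose c)) + real ((Suc c + d) choose (Suc c))"
    proof -
      have "(\<Sum>xs\<in>{xs\<in>arrangements a b. R1 xs < R2 xs}. real (RM xs)) = (\<Sum>zs\<in>arrangements a d. real (R1 zs) + 1)"
        unfolding S Z by (simp add: sum.reindex[OF inj_hl] RMv add.commute)
      also have "\<dots> = real (\<Sum>zs\<in>arrangements a d. R1 zs) + real (card (arrangements a d))"
        by (simp add: sum.distrib)
      also have "\<dots> = real ((d+1) * ((c + d) choose c)) + real ((Suc c + d) choose (Suc c))"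
        unfolding c FSuc card_arr by simp
      finally show ?thesis .
    qed
    have id1: "(c+1) * ((Suc c + d) choose (Suc c)) = (c+d+1) * ((c+d) choose c)"
      using Suc_times_binomial[of c "c+d"] by simp
    define B where "B = real ((c+d) choose c)"
    have Bp: "B > 0" unfolding B_def by simp
    have X: "real ((Suc c + d) choose (Suc c)) = (real d + real c + 1) * B / (real c + 1)"
      using arg_cong[OF id1, of real] unfolding B_def by (simp add: field_simps)
    have e1: "cond_exp a b (\<lambda>xs. real (RM xs)) (\<lambda>xs. R1 xs < R2 xs) = (real ((d+1) * ((c + d) choose c)) + real ((Suc c + d) choose (Suc c))) / real ((Suc c + d) choose (Suc c))"
      unfolding cond_exp_def sum card by (rule refl)
    have e2: "real ((d+1) * ((c + d) choose c)) = (real d + 1) * B" unfolding B_def by (simp add: algebra_simps)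
    have "cond_exp a b (\<lambda>xs. real (RM xs)) (\<lambda>xs. R1 xs < R2 xs) = ((real d + 1) * B + (real d + real c + 1) * B / (real c + 1)) / ((real d + real c + 1) * B / (real c + 1))"
      unfolding e1 e2 X by (rule refl)
    also have "\<dots> = 1 + (real d + 1)*(real c + 1)/(real d + real c + 1)"
      by (rule alg1[OF Bp]) simp_all
    also have "\<dots> = 2 + real d * real c/(real d + real c + 1)"
      by (rule alg2) simp_all
    also have "\<dots> = 2 + (real a - 1) * (real b - 2) / (real (a + b) - 2)"
    proof -
      have "real a - 1 = c" "real b - 2 = d" "real (a+b) - 2 = real d + real c + 1" unfolding c d by simp_all
      thus ?thesis by (simp only:) (simp add: mult.commute)
    qed
    finally show ?thesis by simp
  qed
qed



lemma rev_arr: "rev ` arrangements a b = arrangements a b"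
proof
  show "rev ` arrangements a b \<subseteq> arrangements a b" by (auto simp: arrangements_def)
  show "arrangements a b \<subseteq> rev ` arrangements a b"
  proof
    fix xs assume "xs \<in> arrangements a b"
    hence "rev xs \<in> arrangements a b" by (auto simp: arrangements_def)
    thus "xs \<in> rev ` arrangements a b" by (metis image_eqI rev_rev_ident)
  qed
qed

lemma R1_TF: "R1 (True#zs@[False]) = R1 (True#zs)"
  unfolding R1_def by (cases zs) (simp_all add: runs_Cons runs_snoc hd_append)

lemma R1_FT: "R1 (False#zs@[True]) = R1 (True#rev zs)"
proof -
  have "R1 (False#zs@[True]) = R1 (zs@[True])" unfolding R1_def by (simp add: runs_Cons)
  also have "\<dots> = R1 (rev (zs@[True]))" unfolding R1_def by (simp only: runs_rev)
  finally show ?thesis by simp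
qed

lemma K0: "(\<Sum>zs\<in>arrangements p 0. R1 (True#zs)) = 1"
proof -
  have "R1 (True # replicate p True) = 1"
    using remdups_adj_replicate[of "Suc p" True] by (simp add: R1_def runs_def del: remdups_adj.simps)
  thus ?thesis by (simp add: arr_a_0)
qed

lemma KSuc: "(\<Sum>zs\<in>arrangements p (Suc q). R1 (True#zs)) + (q+1) * ((p+q) choose p) = (q+2) * ((p + Suc q) choose p)"
proof -
  have "(\<Sum>xs\<in>arrangements (Suc p) (Suc q). R1 xs) = (\<Sum>zs\<in>arrangements p (Suc q). R1 (True#zs)) + (\<Sum>zs\<in>arrangements (Suc p) q. R1 zs)"
    unfolding sum_arr_Suc_Suc R1_False by simp
  thus ?thesis unfolding FSuc by simp
qed

lemma part3:
  assumes "a \<ge> 1" "b \<ge> 1"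
  shows "event_prob a b (\<lambda>xs. R1 xs = R2 xs) > 0 \<longrightarrow>
           cond_exp a b (\<lambda>xs. real (RM xs)) (\<lambda>xs. R1 xs = R2 xs)
             = 1 + (real a - 1) * (real b - 1) / (real (a + b) - 2)"
proof -
  obtain p where p: "a = Suc p" using assms by (cases a) auto
  obtain q where q: "b = Suc q" using assms by (cases b) auto
  have S: "{xs\<in>arrangements a b. R1 xs = R2 xs} = (\<lambda>zs. True#zs@[False]) ` arrangements p q \<union> (\<lambda>zs. False#zs@[True]) ` arrangements p q"
  proof -
    have "{xs\<in>arrangements a b. R1 xs = R2 xs} = {xs\<in>arrangements a b. 2 \<le> length xs \<and> hd xs = True \<and> last xs = False} \<union> {xs\<in>arrangements a b. 2 \<le> length xs \<and> hd xs = False \<and> last xs = True}"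
      using diff_cases(3)[OF _ assms] by blast
    also have "\<dots> = (\<lambda>zs. True#zs@[False]) ` {zs. True#zs@[False] \<in> arrangements a b} \<union> (\<lambda>zs. False#zs@[True]) ` {zs. False#zs@[True] \<in> arrangements a b}"
      by (simp only: hl_image)
    also have "{zs. True#zs@[False] \<in> arrangements a b} = arrangements p q" unfolding p q by (auto simp: arrangements_def)
    also have "{zs. False#zs@[True] \<in> arrangements a b} = arrangements p q" unfolding p q by (auto simp: arrangements_def)
    finally show ?thesis .
  qed
  have disj: "(\<lambda>zs. True#zs@[False]) ` arrangements p q \<inter> (\<lambda>zs. False#zs@[True]) ` arrangements p q = {}" by auto
  have card: "card {xs\<in>arrangements a b. R1 xs = R2 xs} = 2 * ((p + q) choose p)"
    unfolding S by (simp add: card_Un_disjoint[OF _ _ disj] finite_arr card_image[OF inj_hl] card_arr)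
  define K where "K = (\<Sum>zs\<in>arrangements p q. R1 (True#zs))"
  have RMeq: "RM xs = R1 xs" if "R1 xs = R2 xs" for xs using that by (simp add: RM_def)
  have sum: "(\<Sum>xs\<in>{xs\<in>arrangements a b. R1 xs = R2 xs}. real (RM xs)) = real K + real K"
  proof -
    have "(\<Sum>xs\<in>{xs\<in>arrangements a b. R1 xs = R2 xs}. real (RM xs)) = (\<Sum>xs\<in>{xs\<in>arrangements a b. R1 xs = R2 xs}. real (R1 xs))"
      by (rule sum.cong) (simp_all add: RMeq)
    also have "\<dots> = (\<Sum>xs\<in>(\<lambda>zs. True#zs@[False]) ` arrangements p q. real (R1 xs)) + (\<Sum>xs\<in>(\<lambda>zs. False#zs@[True]) ` arrangements p q. real (R1 xs))"
      unfolding S by (rule sum.union_disjoint[OF _ _ disj]) (simp_all add: finite_arr)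
    also have "\<dots> = (\<Sum>zs\<in>arrangements p q. real (R1 (True#zs))) + (\<Sum>zs\<in>arrangements p q. real (R1 (True#rev zs)))"
      by (simp add: sum.reindex[OF inj_hl] R1_TF R1_FT)
    also have "(\<Sum>zs\<in>arrangements p q. real (R1 (True#rev zs))) = (\<Sum>zs\<in>rev ` arrangements p q. real (R1 (True#zs)))"
      by (simp add: sum.reindex inj_on_def)
    also have "\<dots> = (\<Sum>zs\<in>arrangements p q. real (R1 (True#zs)))" by (simp only: rev_arr)
    finally show ?thesis unfolding K_def by simp
  qed
  have e1: "cond_exp a b (\<lambda>xs. real (RM xs)) (\<lambda>xs. R1 xs = R2 xs) = (real K + real K) / (2 * real ((p + q) choose p))"
    unfolding cond_exp_def sum card by simp
  show ?thesis
  proof (cases q)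
    case 0
    have "K = 1" unfolding K_def 0 by (rule K0)
    thus ?thesis unfolding e1 using q 0 by simp
  next
    case (Suc y)
    define C where "C = real ((p + Suc y) choose p)"
    have Cp: "C > 0" unfolding C_def by simp
    have abs: "(y+1) * ((p + Suc y) choose p) = (p + y + 1) * ((p+y) choose p)"
      using binomial_absorb_comp[of "p + Suc y" p] by simp
    have C': "real ((p+y) choose p) = (real y + 1) * C / (real p + real y + 1)"
      using arg_cong[OF abs, of real] unfolding C_def by (simp add: field_simps)
    have Kv: "real K = (real y + 2) * C - (real y + 1) * ((real y + 1) * C / (real p + real y + 1))"
    proof -
      have "real K + (real y + 1) * real ((p+y) choose p) = (real y + 2) * C"
        using arg_cong[OF KSuc[of p y], of real] unfolding K_def C_def Suc by (simp add: algebra_simps)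
      thus ?thesis unfolding C' by simp
    qed
    have "cond_exp a b (\<lambda>xs. real (RM xs)) (\<lambda>xs. R1 xs = R2 xs) = 
       ((real y + 2) * C - (real y + 1) * ((real y + 1) * C / (real p + real y + 1)) + ((real y + 2) * C - (real y + 1) * ((real y + 1) * C / (real p + real y + 1)))) / (2 * C)"
      unfolding e1 Kv C_def Suc by (rule refl)
    also have "\<dots> = 1 + real p * (real y + 1) / (real p + real y + 1)"
      by (rule alg3[OF Cp]) simp_all
    also have "\<dots> = 1 + (real a - 1) * (real b - 1) / (real (a + b) - 2)"
    proof -
      have "real a - 1 = real p" "real b - 1 = real y + 1" "real (a+b) - 2 = real p + real y + 1" unfolding p q Suc by simp_all
      thus ?thesis by (simp only:)
    qed
    finally show ?thesis by simp
  qed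
qed


theorem lemma2:
  fixes n1 n2 :: nat
  assumes "n1 \<ge> 1" and "n2 \<ge> 1"
  defines "n \<equiv> n1 + n2"
  shows "(event_prob n1 n2 (\<lambda>xs. R1 xs > R2 xs) > 0 \<longrightarrow>
           cond_exp n1 n2 (\<lambda>xs. real (RM xs)) (\<lambda>xs. R1 xs > R2 xs)
             = 2 + (real n1 - 2) * (real n2 - 1) / (real n - 2))
       \<and> (event_prob n1 n2 (\<lambda>xs. R1 xs < R2 xs) > 0 \<longrightarrow>
           cond_exp n1 n2 (\<lambda>xs. real (RM xs)) (\<lambda>xs. R1 xs < R2 xs)
             = 2 + (real n1 - 1) * (real n2 - 2) / (real n - 2))
       \<and> (event_prob n1 n2 (\<lambda>xs. R1 xs = R2 xs) > 0 \<longrightarrow>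
           cond_exp n1 n2 (\<lambda>xs. real (RM xs)) (\<lambda>xs. R1 xs = R2 xs)
             = 1 + (real n1 - 1) * (real n2 - 1) / (real n - 2))"
  using part1[OF assms(1,2)] part2[OF assms(1,2)] part3[OF assms(1,2)] unfolding n_def by blast

end
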